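(* For any L-primitive set $A\subset\mathbb{Z}_{>1}$, the lower natural density satisfies $\underline{\mathrm{d}}(\mathrm{L}_A)\ge\sum_{a\in A}\mathrm{d}(\mathrm{L}_a)$. Moreover, if $\sum_{a\in A}1/a<\infty$, then the natural density $\mathrm{d}(\mathrm{L}_A)$ exists and equals $\sum_{a\in A}\mathrm{d}(\mathrm{L}_a)$.
   Context: For an integer $a>1$ with largest prime factor $P(a)$, $\mathrm{L}_a=\{ba: b\in\mathbb{N},\ \text{every prime } p\mid b \text{ satisfies } p\ge P(a)\}$, which has natural density $\mathrm{d}(\mathrm{L}_a)=\frac1a\prod_{p<P(a)}(1-\frac1p)$; $\mathrm{L}_A=\bigcup_{a\in A}\mathrm{L}_a$. $\underline{\mathrm{d}}(S)=\liminf_{x\to\infty}|S\cap[1,x]|/x$. A set $A\subset\mathbb{Z}_{>1}$ is L-primitive if $a'\notin\mathrm{L}_a$ for all distinct $a,a'\in A$. *)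

theory Defs
  imports "HOL-Analysis.Analysis" "HOL-Computational_Algebra.Primes"
begin

definition Pmax :: "nat \<Rightarrow> nat" where
  "Pmax a = Max (prime_factors a)"

definition Lset :: "nat \<Rightarrow> nat set" where
  "Lset a = {b * a | b. b \<ge> 1 \<and> (\<forall>p. prime p \<longrightarrow> p dvd b \<longrightarrow> p \<ge> Pmax a)}"

definition LsetA :: "nat set \<Rightarrow> nat set" where
  "LsetA A = (\<Union>a\<in>A. Lset a)"

definition dL :: "nat \<Rightarrow> real" where
  "dL a = (1 / real a) * (\<Prod>p\<in>{p. prime p \<and> p < Pmax a}. (1 - 1 / real p))"

definition L_primitive :: "nat set \<Rightarrow> bool" where
  "L_primitive A \<longleftrightarrow> (\<forall>a\<in>A. \<forall>a'\<in>A. a \<noteq> a' \<longrightarrow> a' \<notin> Lset a)"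

definition count_ratio :: "nat set \<Rightarrow> real \<Rightarrow> real" where
  "count_ratio S x = real (card {n \<in> S. 1 \<le> n \<and> real n \<le> x}) / x"

definition lower_density :: "nat set \<Rightarrow> ereal" where
  "lower_density S = Liminf at_top (\<lambda>x::real. ereal (count_ratio S x))"

end

theory Submission
  imports Defs "HOL-Number_Theory.Number_Theory" "HOL-Real_Asymp.Real_Asymp" begin

lemma Pmax_facts:
  assumes "a > (1::nat)"
  shows "prime (Pmax a)" "Pmax a dvd a" "\<And>p. prime p \<Longrightarrow> p dvd a \<Longrightarrow> p \<le> Pmax a"
proof -
  have ne: "prime_factors a \<noteq> {}"
    using assms prime_factor_nat[of a] by (metis empty_iff gr_implies_not0 less_not_refl prime_factorsI)
  have fin: "finite (prime_factors a)" by simp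
  have "Pmax a \<in> prime_factors a" unfolding Pmax_def using Max_in[OF fin ne] .
  then show "prime (Pmax a)" "Pmax a dvd a" by auto
  show "p \<le> Pmax a" if "prime p" "p dvd a" for p
    unfolding Pmax_def using that assms by (intro Max_ge[OF fin]) (auto intro: prime_factorsI)
qed

lemma Lset_iff: "n \<in> Lset a \<longleftrightarrow> (\<exists>b. n = b * a \<and> b \<ge> 1 \<and> (\<forall>p. prime p \<longrightarrow> p dvd b \<longrightarrow> p \<ge> Pmax a))"
  unfolding Lset_def by auto

lemma mult_small_eq:
  assumes "n = b * a" "b \<ge> 1" "\<forall>p. prime p \<longrightarrow> p dvd b \<longrightarrow> p \<ge> P" "a > 0"
    "prime p" "p < P"
  shows "multiplicity p n = multiplicity p (a::nat)"
proof -
  have "\<not> p dvd b"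
  proof
    assume "p dvd b" then have "P \<le> p" using assms(3) assms(5) by blast
    with assms(6) show False by simp
  qed
  then have "multiplicity p b = 0" by (rule not_dvd_imp_multiplicity_0)
  moreover have "multiplicity p (b * a) = multiplicity p b + multiplicity p a"
    by (rule prime_elem_multiplicity_mult_distrib) (use assms in auto)
  ultimately show ?thesis using assms(1) by simp
qed
lemma L_sub:
  assumes a1: "a > (1::nat)" and a1': "a' > 1" and n: "n \<in> Lset a" "n \<in> Lset a'"
    and ord: "Pmax a < Pmax a' \<or> (Pmax a = Pmax a' \<and> multiplicity (Pmax a) a \<le> multiplicity (Pmax a) a')"
  shows "a' \<in> Lset a"
proof -
  define P where "P = Pmax a"
  define P' where "P' = Pmax a'"
  have PP: "P \<le> P'" using ord P_def P'_def by auto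
  obtain b where b: "n = b * a" "b \<ge> 1" "\<forall>p. prime p \<longrightarrow> p dvd b \<longrightarrow> p \<ge> P"
    using n(1) unfolding Lset_iff P_def by blast
  obtain b' where b': "n = b' * a'" "b' \<ge> 1" "\<forall>p. prime p \<longrightarrow> p dvd b' \<longrightarrow> p \<ge> P'"
    using n(2) unfolding Lset_iff P'_def by blast
  have b'P: "\<forall>p. prime p \<longrightarrow> p dvd b' \<longrightarrow> p \<ge> P" using b'(3) PP le_trans by blast
  have eq: "multiplicity p a = multiplicity p a'" if "prime p" "p < P" for p
  proof -
    have "multiplicity p n = multiplicity p a" by (rule mult_small_eq[OF b _ that]) (use a1 in simp)
    moreover have "multiplicity p n = multiplicity p a'" by (rule mult_small_eq[OF b'(1,2) b'P _ that]) (use a1' in simp)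
    ultimately show ?thesis by simp
  qed
  have dvd: "a dvd a'"
  proof (rule multiplicity_le_imp_dvd)
    show "a \<noteq> 0" using a1 by simp
    fix p :: nat assume p: "prime p"
    show "multiplicity p a \<le> multiplicity p a'"
    proof (cases "p < P")
      case True then show ?thesis using eq p by simp
    next
      case False
      show ?thesis
      proof (cases "p = P")
        case False
        with \<open>\<not> p < P\<close> have "P < p" by simp
        have "\<not> p dvd a"
        proof
          assume "p dvd a" then have "p \<le> P" using Pmax_facts(3)[OF a1 p] P_def by simp
          with \<open>P < p\<close> show False by simp
        qed
        then show ?thesis by (simp add: not_dvd_imp_multiplicity_0)
      next
        case True
        show ?thesis
        proof (cases "P < P'")
          case True
          have "\<not> p dvd b'"
          proof
            assume "p dvd b'" then have "P' \<le> p" using b'(3) p by blast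
            with \<open>P < P'\<close> \<open>p = P\<close> show False by simp
          qed
          then have "multiplicity p b' = 0" by (simp add: not_dvd_imp_multiplicity_0)
          moreover have "multiplicity p (b' * a') = multiplicity p b' + multiplicity p a'"
            by (rule prime_elem_multiplicity_mult_distrib) (use b' a1' p in auto)
          moreover have "multiplicity p (b * a) = multiplicity p b + multiplicity p a"
            by (rule prime_elem_multiplicity_mult_distrib) (use b a1 p in auto)
          ultimately show ?thesis using b(1) b'(1) by simp
        next
          case False
          with PP have "P = P'" by simp
          then show ?thesis using ord \<open>p = P\<close> P_def P'_def by simp
        qed
      qed
    qed
  qed
  then obtain c where c: "a' = c * a" by (metis dvdE mult.commute)
  have c1: "c \<ge> 1" using c a1' by (cases c) auto
  have cp: "p \<ge> P" if "prime p" "p dvd c" for p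
  proof (rule ccontr)
    assume "\<not> P \<le> p"
    then have "p < P" by simp
    have "multiplicity p (c * a) = multiplicity p c + multiplicity p a"
      by (rule prime_elem_multiplicity_mult_distrib) (use c1 a1 that in auto)
    moreover have "multiplicity p c > 0" using that c1 by (simp add: prime_multiplicity_gt_zero_iff)
    ultimately show False using eq[OF that(1) \<open>p < P\<close>] c by simp
  qed
  have "a' = c * a \<and> 1 \<le> c \<and> (\<forall>p. prime p \<longrightarrow> p dvd c \<longrightarrow> Pmax a \<le> p)"
    using c c1 cp unfolding P_def by simp
  then show ?thesis unfolding Lset_iff by (rule exI)
qed

lemma L_disj:
  assumes "\<forall>a\<in>A. a > (1::nat)" "L_primitive A" "a \<in> A" "a' \<in> A" "a \<noteq> a'"
  shows "Lset a \<inter> Lset a' = {}"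
proof (rule ccontr)
  assume "Lset a \<inter> Lset a' \<noteq> {}"
  then obtain n where n: "n \<in> Lset a" "n \<in> Lset a'" by auto
  have "a' \<in> Lset a \<or> a \<in> Lset a'"
  proof (cases "Pmax a < Pmax a' \<or> (Pmax a = Pmax a' \<and> multiplicity (Pmax a) a \<le> multiplicity (Pmax a) a')")
    case True then show ?thesis using L_sub[OF _ _ n] assms by auto
  next
    case False
    then have "Pmax a' < Pmax a \<or> (Pmax a' = Pmax a \<and> multiplicity (Pmax a') a' \<le> multiplicity (Pmax a') a)"
      by auto
    then show ?thesis using L_sub[OF _ _ n(2,1)] assms by auto
  qed
  moreover have "a' \<notin> Lset a" using assms(2-5) unfolding L_primitive_def by simp
  moreover have "a \<notin> Lset a'" using assms(2-5) unfolding L_primitive_def by simp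
  ultimately show False by simp
qed


definition primes_below :: "nat \<Rightarrow> nat set" where
  "primes_below P = {p. prime p \<and> p < P}"

definition primorial_below :: "nat \<Rightarrow> nat" where
  "primorial_below P = \<Prod>(primes_below P)"

lemma finite_primes_below: "finite (primes_below P)"
  unfolding primes_below_def by (rule finite_subset[of _ "{..<P}"]) auto

lemma primorial_pos: "primorial_below P > 0"
  unfolding primorial_below_def using finite_primes_below
  by (metis (no_types, lifting) mem_Collect_eq not_prime_0 bot_nat_0.not_eq_extremum prod_zero_iff primes_below_def)

lemma prime_dvd_primorial:
  assumes "prime p"
  shows "p dvd primorial_below P \<longleftrightarrow> p < P"
proof -
  have "p dvd primorial_below P \<longleftrightarrow> (\<exists>q\<in>primes_below P. p dvd q)"
    unfolding primorial_below_def by (rule prime_dvd_prod_iff[OF finite_primes_below assms])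
  also have "\<dots> \<longleftrightarrow> p \<in> primes_below P"
  proof
    assume "\<exists>q\<in>primes_below P. p dvd q"
    then obtain q where q: "q \<in> primes_below P" "p dvd q" by blast
    then have "p = q" using assms by (simp add: primes_below_def primes_dvd_imp_eq)
    then show "p \<in> primes_below P" using q by simp
  qed (use dvd_refl in blast)
  finally show ?thesis using assms by (simp add: primes_below_def)
qed

lemma prime_factors_primorial: "prime_factors (primorial_below P) = primes_below P"
proof -
  have "primorial_below P \<noteq> 0" using primorial_pos[of P] by simp
  then have "prime_factors (primorial_below P) = {p. prime p \<and> p dvd primorial_below P}"
    by (rule prime_factors_dvd)
  also have "\<dots> = primes_below P" using prime_dvd_primorial by (auto simp: primes_below_def)
  finally show ?thesis .
qed

lemma totient_primorial:
  "real (totient (primorial_below P)) / real (primorial_below P) = (\<Prod>p\<in>primes_below P. 1 - 1 / real p)"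
  using totient_formula2[of "primorial_below P"] primorial_pos[of P]
  by (simp add: prime_factors_primorial)

lemma good_iff_coprime:
  "(\<forall>p. prime p \<longrightarrow> p dvd b \<longrightarrow> P \<le> p) \<longleftrightarrow> coprime b (primorial_below P)"
proof
  assume H: "\<forall>p. prime p \<longrightarrow> p dvd b \<longrightarrow> P \<le> p"
  show "coprime b (primorial_below P)"
  proof (rule ccontr)
    assume "\<not> coprime b (primorial_below P)"
    then have "gcd b (primorial_below P) \<noteq> 1" unfolding coprime_iff_gcd_eq_1 .
    from prime_factor_nat[OF this] obtain p where p: "prime p" "p dvd gcd b (primorial_below P)"
      by blast
    have pb: "p dvd b" using p(2) gcd_dvd1 dvd_trans by blast
    have pQ: "p dvd primorial_below P" using p(2) gcd_dvd2 dvd_trans by blast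
    have "p < P" using pQ prime_dvd_primorial[OF p(1)] by simp
    moreover have "P \<le> p" using H p(1) pb by blast
    ultimately show False by simp
  qed
next
  assume C: "coprime b (primorial_below P)"
  show "\<forall>p. prime p \<longrightarrow> p dvd b \<longrightarrow> P \<le> p"
  proof (intro allI impI)
    fix p :: nat assume p: "prime p" "p dvd b"
    show "P \<le> p"
    proof (rule ccontr)
      assume "\<not> P \<le> p"
      then have "p dvd primorial_below P" using prime_dvd_primorial[OF p(1)] by simp
      from coprime_common_divisor[OF C p(2) this] have "is_unit p" .
      then show False using p(1) by simp
    qed
  qed
qed

lemma coprime_shift:
  "coprime (b + k * Q) Q \<longleftrightarrow> coprime b (Q::nat)"
proof -
  have "gcd (b + k * Q) Q = gcd Q (k * Q + b)" by (subst add.commute) (rule gcd.commute)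
  also have "\<dots> = gcd Q b" by (rule gcd_add_mult)
  also have "\<dots> = gcd b Q" by (rule gcd.commute)
  finally show ?thesis unfolding coprime_iff_gcd_eq_1 by simp
qed

definition Tset :: "nat \<Rightarrow> nat \<Rightarrow> nat set" where
  "Tset Q N = {b. 1 \<le> b \<and> b \<le> N \<and> coprime b Q}"

lemma finite_Tset: "finite (Tset Q N)"
  unfolding Tset_def by (rule finite_subset[of _ "{..N}"]) auto

lemma card_Tset_mult:
  assumes "Q > 0"
  shows "card (Tset Q (k * Q)) = k * totient Q"
proof (induction k)
  case 0
  have "Tset Q 0 = {}" unfolding Tset_def by auto
  then show ?case by simp
next
  case (Suc k)
  have split: "Tset Q (Suc k * Q) = Tset Q (k * Q) \<union> (\<lambda>b. b + k * Q) ` totatives Q"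
  proof (intro equalityI subsetI)
    fix x assume x: "x \<in> Tset Q (Suc k * Q)"
    show "x \<in> Tset Q (k * Q) \<union> (\<lambda>b. b + k * Q) ` totatives Q"
    proof (cases "x \<le> k * Q")
      case True then show ?thesis using x unfolding Tset_def by auto
    next
      case False
      have x1: "1 \<le> x" "x \<le> Suc k * Q" "coprime x Q" using x unfolding Tset_def by auto
      define y where "y = x - k * Q"
      have xy: "x = y + k * Q" using False y_def by simp
      have cy: "coprime y Q" using coprime_shift[of y k Q] x1(3) xy by simp
      have "0 < y" "y \<le> Q" using False x1(2) y_def by auto
      then have "y \<in> totatives Q" using cy by (simp add: totatives_def)
      then show ?thesis using xy by blast
    qed
  next
    fix x assume "x \<in> Tset Q (k * Q) \<union> (\<lambda>b. b + k * Q) ` totatives Q"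
    then show "x \<in> Tset Q (Suc k * Q)"
    proof
      assume "x \<in> Tset Q (k * Q)" then show ?thesis unfolding Tset_def by auto
    next
      assume "x \<in> (\<lambda>b. b + k * Q) ` totatives Q"
      then obtain b where b: "b \<in> totatives Q" "x = b + k * Q" by blast
      have b1: "0 < b" "b \<le> Q" "coprime b Q" using b(1) by (auto simp: totatives_def)
      have "coprime x Q" using coprime_shift[of b k Q] b1(3) b(2) by simp
      moreover have "1 \<le> x" "x \<le> Suc k * Q" using b1 b(2) by auto
      ultimately show ?thesis unfolding Tset_def by simp
    qed
  qed
  have disj: "Tset Q (k * Q) \<inter> (\<lambda>b. b + k * Q) ` totatives Q = {}"
  proof -
    have "x \<notin> (\<lambda>b. b + k * Q) ` totatives Q" if "x \<in> Tset Q (k * Q)" for x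
      using that unfolding Tset_def totatives_def by auto
    then show ?thesis by blast
  qed
  have "card (Tset Q (Suc k * Q)) = card (Tset Q (k * Q)) + card ((\<lambda>b. b + k * Q) ` totatives Q)"
    unfolding split by (rule card_Un_disjoint) (use finite_Tset disj in simp_all)
  also have "card ((\<lambda>b. b + k * Q) ` totatives Q) = totient Q"
    unfolding totient_def by (rule card_image) (auto simp: inj_on_def)
  finally show ?case using Suc.IH by simp
qed

lemma card_Tset_bounds:
  assumes "Q > 0"
  shows "real N * (real (totient Q) / real Q) - real Q \<le> real (card (Tset Q N))"
    and "real (card (Tset Q N)) \<le> real N * (real (totient Q) / real Q) + real Q"
proof -
  define k where "k = N div Q"
  define r where "r = N mod Q"
  have N: "N = k * Q + r" unfolding k_def r_def by simp
  have rQ: "r < Q" unfolding r_def using assms by simp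
  have sub: "Tset Q N \<subseteq> Tset Q (k * Q) \<union> {k * Q <.. N}" unfolding Tset_def by auto
  have sup: "Tset Q (k * Q) \<subseteq> Tset Q N" unfolding Tset_def N by auto
  have "card (Tset Q N) \<le> card (Tset Q (k * Q) \<union> {k * Q <.. N})"
    by (rule card_mono[OF _ sub]) (simp add: finite_Tset)
  also have "\<dots> \<le> card (Tset Q (k * Q)) + card {k * Q <.. N}" by (rule card_Un_le)
  also have "card {k * Q <.. N} = r" using N by simp
  finally have up: "card (Tset Q N) \<le> k * totient Q + r" using card_Tset_mult[OF assms] by simp
  have lo: "k * totient Q \<le> card (Tset Q N)"
    using card_mono[OF finite_Tset sup] card_Tset_mult[OF assms] by simp
  have tQ: "totient Q \<le> Q" by (rule totient_le)
  have eq: "real N * (real (totient Q) / real Q) = real k * real (totient Q) + real r * (real (totient Q) / real Q)"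
    using assms unfolding N by (simp add: field_simps)
  have d1: "real (totient Q) / real Q \<le> 1" using tQ assms by simp
  have r1: "real r * (real (totient Q) / real Q) \<le> real r"
    using mult_left_mono[OF d1, of "real r"] by simp
  have r0: "0 \<le> real r * (real (totient Q) / real Q)" by simp
  have loR: "real k * real (totient Q) \<le> real (card (Tset Q N))"
    using lo by (metis of_nat_le_iff of_nat_mult)
  have upR: "real (card (Tset Q N)) \<le> real k * real (totient Q) + real r"
    using up by (metis of_nat_add of_nat_le_iff of_nat_mult)
  have rQR: "real r \<le> real Q" using rQ by simp
  show "real N * (real (totient Q) / real Q) - real Q \<le> real (card (Tset Q N))"
    using eq r1 loR rQR r0 by linarith
  show "real (card (Tset Q N)) \<le> real N * (real (totient Q) / real Q) + real Q"
    using eq r0 upR rQR by linarith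
qed


definition cset :: "nat set \<Rightarrow> real \<Rightarrow> nat set" where
  "cset S x = {n \<in> S. 1 \<le> n \<and> real n \<le> x}"

lemma count_ratio_cset: "count_ratio S x = real (card (cset S x)) / x"
  unfolding count_ratio_def cset_def by simp

lemma finite_cset: "finite (cset S x)"
proof (rule finite_subset[of _ "{..nat \<lceil>x\<rceil>}"])
  show "cset S x \<subseteq> {..nat \<lceil>x\<rceil>}"
  proof
    fix n assume "n \<in> cset S x"
    then have "real n \<le> x" unfolding cset_def by simp
    then have "int n \<le> \<lceil>x\<rceil>" by linarith
    then show "n \<in> {..nat \<lceil>x\<rceil>}" by simp
  qed
qed simp

lemma cset_mono: "S \<subseteq> T \<Longrightarrow> card (cset S x) \<le> card (cset T x)"
  by (rule card_mono[OF finite_cset]) (auto simp: cset_def)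

lemma dL_eq:
  "dL a = (1 / real a) * (real (totient (primorial_below (Pmax a))) / real (primorial_below (Pmax a)))"
  unfolding dL_def totient_primorial primes_below_def by simp

lemma nat_floor_bounds:
  assumes "0 \<le> (y::real)"
  shows "real (nat \<lfloor>y\<rfloor>) \<le> y" "y - 1 \<le> real (nat \<lfloor>y\<rfloor>)"
proof -
  have "0 \<le> \<lfloor>y\<rfloor>" using assms by simp
  then have e: "real (nat \<lfloor>y\<rfloor>) = real_of_int \<lfloor>y\<rfloor>" by simp
  show "real (nat \<lfloor>y\<rfloor>) \<le> y" unfolding e by (rule of_int_floor_le)
  show "y - 1 \<le> real (nat \<lfloor>y\<rfloor>)" unfolding e by linarith
qed

lemma cset_Lset:
  assumes a: "a > (1::nat)" and x: "x \<ge> 0"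
  shows "cset (Lset a) x = (\<lambda>b. b * a) ` Tset (primorial_below (Pmax a)) (nat \<lfloor>x / real a\<rfloor>)"
proof (intro equalityI subsetI)
  fix n assume "n \<in> cset (Lset a) x"
  then have n: "n \<in> Lset a" "real n \<le> x" unfolding cset_def by auto
  then obtain b where b: "n = b * a" "b \<ge> 1" "\<forall>p. prime p \<longrightarrow> p dvd b \<longrightarrow> p \<ge> Pmax a"
    unfolding Lset_iff by blast
  have cop: "coprime b (primorial_below (Pmax a))" using b(3) good_iff_coprime by blast
  have "real b * real a \<le> x" using n(2) b(1) by simp
  then have "real b \<le> x / real a" using a by (simp add: field_simps)
  then have "b \<le> nat \<lfloor>x / real a\<rfloor>" by linarith
  then have "b \<in> Tset (primorial_below (Pmax a)) (nat \<lfloor>x / real a\<rfloor>)"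
    unfolding Tset_def using b(2) cop by simp
  then show "n \<in> (\<lambda>b. b * a) ` Tset (primorial_below (Pmax a)) (nat \<lfloor>x / real a\<rfloor>)"
    using b(1) by blast
next
  fix n assume "n \<in> (\<lambda>b. b * a) ` Tset (primorial_below (Pmax a)) (nat \<lfloor>x / real a\<rfloor>)"
  then obtain b where b: "b \<in> Tset (primorial_below (Pmax a)) (nat \<lfloor>x / real a\<rfloor>)" "n = b * a"
    by blast
  have b1: "1 \<le> b" "b \<le> nat \<lfloor>x / real a\<rfloor>" "coprime b (primorial_below (Pmax a))"
    using b(1) unfolding Tset_def by auto
  have good: "\<forall>p. prime p \<longrightarrow> p dvd b \<longrightarrow> p \<ge> Pmax a" using b1(3) good_iff_coprime by blast
  have "n \<in> Lset a" unfolding Lset_iff using b(2) b1(1) good by blast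
  moreover have "real b \<le> x / real a"
  proof -
    have "real b \<le> real (nat \<lfloor>x / real a\<rfloor>)" using b1(2) by simp
    moreover have "real (nat \<lfloor>x / real a\<rfloor>) \<le> x / real a" using x by (intro nat_floor_bounds) simp
    ultimately show ?thesis by linarith
  qed
  then have "real b * real a \<le> x" using a by (simp add: field_simps)
  then have "real n \<le> x" using b(2) by simp
  moreover have "1 \<le> n" using b(2) b1(1) a by simp
  ultimately show "n \<in> cset (Lset a) x" unfolding cset_def by simp
qed

lemma card_cset_Lset:
  assumes a: "a > (1::nat)" and x: "x \<ge> 0"
  shows "card (cset (Lset a) x) = card (Tset (primorial_below (Pmax a)) (nat \<lfloor>x / real a\<rfloor>))"
  unfolding cset_Lset[OF a x] using a by (intro card_image) (auto simp: inj_on_def)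

lemma card_cset_Lset_le:
  assumes a: "a > (1::nat)" and x: "x \<ge> 0"
  shows "real (card (cset (Lset a) x)) \<le> x / real a"
proof -
  have "Tset (primorial_below (Pmax a)) (nat \<lfloor>x / real a\<rfloor>) \<subseteq> {1..nat \<lfloor>x / real a\<rfloor>}"
    unfolding Tset_def by auto
  then have "card (Tset (primorial_below (Pmax a)) (nat \<lfloor>x / real a\<rfloor>)) \<le> nat \<lfloor>x / real a\<rfloor>"
    using card_mono[of "{1..nat \<lfloor>x / real a\<rfloor>}"] by fastforce
  then have "real (card (cset (Lset a) x)) \<le> real (nat \<lfloor>x / real a\<rfloor>)"
    unfolding card_cset_Lset[OF a x] by simp
  also have "\<dots> \<le> x / real a" by (rule nat_floor_bounds(1)) (use x in simp)
  finally show ?thesis .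
qed

lemma tendsto_of_bound:
  fixes f :: "real \<Rightarrow> real"
  assumes "eventually (\<lambda>x. \<bar>f x - L\<bar> \<le> C / x) at_top"
  shows "(f \<longlongrightarrow> L) at_top"
proof (rule tendsto_sandwich)
  show "eventually (\<lambda>x. L - C / x \<le> f x) at_top" using assms by eventually_elim linarith
  show "eventually (\<lambda>x. f x \<le> L + C / x) at_top" using assms by eventually_elim linarith
  have "((\<lambda>x::real. C / x) \<longlongrightarrow> 0) at_top" by real_asymp
  then show "((\<lambda>x. L - C / x) \<longlongrightarrow> L) at_top" "((\<lambda>x. L + C / x) \<longlongrightarrow> L) at_top"
    using tendsto_diff[OF tendsto_const, of _ 0 at_top L] tendsto_add[OF tendsto_const, of _ 0 at_top L]
    by auto
qed

lemma Lset_density: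
  assumes a: "a > (1::nat)"
  shows "(count_ratio (Lset a) \<longlongrightarrow> dL a) at_top"
proof (rule tendsto_of_bound)
  define Q where "Q = primorial_below (Pmax a)"
  define d where "d = real (totient Q) / real Q"
  have Q0: "Q > 0" unfolding Q_def by (rule primorial_pos)
  have d0: "0 \<le> d" unfolding d_def by simp
  have d1: "d \<le> 1" unfolding d_def using totient_le[of Q] Q0 by simp
  have dLd: "dL a = d / real a" unfolding dL_eq d_def Q_def by simp
  show "eventually (\<lambda>x. \<bar>count_ratio (Lset a) x - dL a\<bar> \<le> (real Q + 1) / x) at_top"
    using eventually_gt_at_top[of "0::real"]
  proof eventually_elim
    case (elim x)
    define N where "N = nat \<lfloor>x / real a\<rfloor>"
    have c: "card (cset (Lset a) x) = card (Tset Q N)"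
      unfolding Q_def N_def using card_cset_Lset[OF a] elim by simp
    have lo: "real N * d - real Q \<le> real (card (Tset Q N))"
      using card_Tset_bounds(1)[OF Q0, of N] unfolding d_def .
    have up: "real (card (Tset Q N)) \<le> real N * d + real Q"
      using card_Tset_bounds(2)[OF Q0, of N] unfolding d_def .
    have xa: "0 \<le> x / real a" using elim by simp
    have N1: "real N \<le> x / real a" unfolding N_def by (rule nat_floor_bounds(1)[OF xa])
    have N2: "x / real a - 1 \<le> real N" unfolding N_def by (rule nat_floor_bounds(2)[OF xa])
    have "real N * d \<le> x / real a * d" using N1 d0 by (rule mult_right_mono)
    moreover have "(x / real a - 1) * d \<le> real N * d" using N2 d0 by (rule mult_right_mono)
    moreover have "(x / real a - 1) * d = x / real a * d - d" by (simp add: algebra_simps)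
    ultimately have b1: "x / real a * d - real Q - 1 \<le> real (card (Tset Q N))"
      and b2: "real (card (Tset Q N)) \<le> x / real a * d + real Q"
      using lo up d1 by linarith+
    have eq: "x / real a * d = x * dL a" unfolding dLd by simp
    have "\<bar>real (card (Tset Q N)) - x * dL a\<bar> \<le> real Q + 1" using b1 b2 eq by linarith
    moreover have "real (card (Tset Q N)) / x - dL a = (real (card (Tset Q N)) - x * dL a) / x"
      using elim by (simp add: field_simps)
    moreover have "\<bar>(real (card (Tset Q N)) - x * dL a) / x\<bar> = \<bar>real (card (Tset Q N)) - x * dL a\<bar> / x"
      using elim by simp
    ultimately have "\<bar>real (card (Tset Q N)) / x - dL a\<bar> \<le> (real Q + 1) / x"
      using elim by (simp add: divide_right_mono)
    then show ?case unfolding count_ratio_cset c .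
  qed
qed


lemma dL_nonneg: "0 \<le> dL a"
  unfolding dL_def
proof (intro mult_nonneg_nonneg prod_nonneg)
  fix p assume "p \<in> {p. prime p \<and> p < Pmax a}"
  then have "real p \<ge> 1" using prime_ge_1_nat by auto
  then show "0 \<le> 1 - 1 / real p" by simp
qed simp

lemma dL_le: "dL a \<le> 1 / real a"
proof -
  have "(\<Prod>p\<in>{p. prime p \<and> p < Pmax a}. (1 - 1 / real p)) \<le> 1"
  proof (rule prod_le_1)
    fix p assume "p \<in> {p. prime p \<and> p < Pmax a}"
    then have "real p \<ge> 1" using prime_ge_1_nat by auto
    then show "0 \<le> 1 - 1 / real p \<and> 1 - 1 / real p \<le> 1" by simp
  qed
  from divide_right_mono[OF this, of "real a"] show ?thesis unfolding dL_def by simp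
qed

lemma cset_LsetA: "cset (LsetA F) x = (\<Union>a\<in>F. cset (Lset a) x)"
  unfolding cset_def LsetA_def by blast

lemma card_cset_LsetA:
  assumes "\<forall>a\<in>A. a > (1::nat)" "L_primitive A" "finite F" "F \<subseteq> A"
  shows "card (cset (LsetA F) x) = (\<Sum>a\<in>F. card (cset (Lset a) x))"
  unfolding cset_LsetA
proof (rule card_UN_disjoint)
  show "finite F" by fact
  show "\<forall>i\<in>F. finite (cset (Lset i) x)" using finite_cset by blast
  show "\<forall>i\<in>F. \<forall>j\<in>F. i \<noteq> j \<longrightarrow> cset (Lset i) x \<inter> cset (Lset j) x = {}"
  proof (intro ballI impI)
    fix i j assume "i \<in> F" "j \<in> F" "i \<noteq> j"
    then have "Lset i \<inter> Lset j = {}" using L_disj[OF assms(1,2)] assms(4) by blast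
    then show "cset (Lset i) x \<inter> cset (Lset j) x = {}" unfolding cset_def by blast
  qed
qed

lemma LsetA_finite_density:
  assumes "\<forall>a\<in>A. a > (1::nat)" "L_primitive A" "finite F" "F \<subseteq> A"
  shows "(count_ratio (LsetA F) \<longlongrightarrow> (\<Sum>a\<in>F. dL a)) at_top"
proof -
  have eq: "count_ratio (LsetA F) x = (\<Sum>a\<in>F. count_ratio (Lset a) x)" for x
    unfolding count_ratio_cset card_cset_LsetA[OF assms] by (simp add: sum_divide_distrib)
  have "((\<lambda>x. \<Sum>a\<in>F. count_ratio (Lset a) x) \<longlongrightarrow> (\<Sum>a\<in>F. dL a)) at_top"
  proof (rule tendsto_sum)
    fix a assume "a \<in> F"
    then have "a > 1" using assms(1,4) by blast
    then show "(count_ratio (Lset a) \<longlongrightarrow> dL a) at_top" by (rule Lset_density)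
  qed
  then show ?thesis unfolding eq .
qed

lemma count_ratio_mono:
  assumes "S \<subseteq> T" "x > 0"
  shows "count_ratio S x \<le> count_ratio T x"
  unfolding count_ratio_cset using cset_mono[OF assms(1), of x] assms(2)
  by (simp add: divide_right_mono)

lemma count_ratio_upper:
  assumes A1: "\<forall>a\<in>A. a > (1::nat)" and sA: "(\<lambda>a. 1 / real a) summable_on A"
    and F: "finite F" "F \<subseteq> A" and x: "x > 0"
  shows "count_ratio (LsetA A) x \<le> count_ratio (LsetA F) x + infsum (\<lambda>a. 1 / real a) (A - F)"
proof -
  define G where "G = (A - F) \<inter> {..nat \<lfloor>x\<rfloor>}"
  have Gfin: "finite G" unfolding G_def by simp
  have sub: "cset (LsetA A) x \<subseteq> cset (LsetA F) x \<union> (\<Union>a\<in>G. cset (Lset a) x)"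
  proof
    fix n assume n: "n \<in> cset (LsetA A) x"
    then obtain a where a: "a \<in> A" "n \<in> Lset a" "1 \<le> n" "real n \<le> x"
      unfolding cset_def LsetA_def by blast
    show "n \<in> cset (LsetA F) x \<union> (\<Union>a\<in>G. cset (Lset a) x)"
    proof (cases "a \<in> F")
      case True
      then have "n \<in> cset (LsetA F) x" unfolding cset_def LsetA_def using a by blast
      then show ?thesis by blast
    next
      case False
      obtain b where b: "n = b * a" "b \<ge> 1" using a(2) unfolding Lset_iff by blast
      have "a \<le> n" using b by simp
      then have "real a \<le> x" using a(4) by linarith
      then have "a \<le> nat \<lfloor>x\<rfloor>" by linarith
      then have "a \<in> G" unfolding G_def using a(1) False by blast
      moreover have "n \<in> cset (Lset a) x" unfolding cset_def using a by blast
      ultimately show ?thesis by blast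
    qed
  qed
  have "card (cset (LsetA A) x) \<le> card (cset (LsetA F) x \<union> (\<Union>a\<in>G. cset (Lset a) x))"
    by (rule card_mono[OF _ sub]) (use finite_cset Gfin in simp)
  also have "\<dots> \<le> card (cset (LsetA F) x) + card (\<Union>a\<in>G. cset (Lset a) x)" by (rule card_Un_le)
  also have "card (\<Union>a\<in>G. cset (Lset a) x) \<le> (\<Sum>a\<in>G. card (cset (Lset a) x))" by (rule card_UN_le[OF Gfin])
  finally have c1: "real (card (cset (LsetA A) x)) \<le> real (card (cset (LsetA F) x)) + (\<Sum>a\<in>G. real (card (cset (Lset a) x)))"
    by (metis add_left_mono of_nat_add of_nat_le_iff of_nat_sum)
  have "(\<Sum>a\<in>G. real (card (cset (Lset a) x))) \<le> (\<Sum>a\<in>G. x * (1 / real a))"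
  proof (rule sum_mono)
    fix a assume "a \<in> G"
    then have "a > 1" using A1 unfolding G_def by blast
    then show "real (card (cset (Lset a) x)) \<le> x * (1 / real a)"
      using card_cset_Lset_le[of a x] x by simp
  qed
  also have "\<dots> = x * (\<Sum>a\<in>G. 1 / real a)" by (simp add: sum_distrib_left)
  also have "(\<Sum>a\<in>G. 1 / real a) \<le> infsum (\<lambda>a. 1 / real a) (A - F)"
    by (rule finite_sum_le_infsum) (use summable_on_subset_banach[OF sA] Gfin in \<open>auto simp: G_def\<close>)
  then have "x * (\<Sum>a\<in>G. 1 / real a) \<le> x * infsum (\<lambda>a. 1 / real a) (A - F)"
    using x by (simp add: mult_left_mono)
  finally have "real (card (cset (LsetA A) x)) \<le> real (card (cset (LsetA F) x)) + x * infsum (\<lambda>a. 1 / real a) (A - F)"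
    using c1 by linarith
  then have "real (card (cset (LsetA A) x)) / x \<le> (real (card (cset (LsetA F) x)) + x * infsum (\<lambda>a. 1 / real a) (A - F)) / x"
    using x by (simp add: divide_right_mono)
  also have "\<dots> = real (card (cset (LsetA F) x)) / x + infsum (\<lambda>a. 1 / real a) (A - F)"
    using x by (simp add: field_simps)
  finally show ?thesis unfolding count_ratio_cset .
qed


lemma LsetA_mono: "F \<subseteq> A \<Longrightarrow> LsetA F \<subseteq> LsetA A"
  unfolding LsetA_def by blast

theorem lemma6p1:
  fixes A :: "nat set"
  assumes "\<forall>a\<in>A. a > 1"
    and "L_primitive A"
  shows "enn2ereal (\<Sum>\<^sub>\<infinity>a\<in>A. ennreal (dL a)) \<le> lower_density (LsetA A) \<and>
         ((\<lambda>a. 1 / real a) summable_on A \<longrightarrow>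
           (\<exists>d. (dL has_sum d) A \<and> (count_ratio (LsetA A) \<longlongrightarrow> d) at_top))"
proof
  have fin_bound: "ereal (sum dL F) \<le> lower_density (LsetA A)" if F: "finite F" "F \<subseteq> A" for F
  proof -
    have lim: "((\<lambda>x. ereal (count_ratio (LsetA F) x)) \<longlongrightarrow> ereal (sum dL F)) at_top"
      using tendsto_ereal[OF LsetA_finite_density[OF assms F]] .
    have "Liminf at_top (\<lambda>x. ereal (count_ratio (LsetA F) x)) = ereal (sum dL F)"
      by (rule lim_imp_Liminf[OF _ lim]) simp
    moreover have "Liminf at_top (\<lambda>x. ereal (count_ratio (LsetA F) x))
        \<le> Liminf at_top (\<lambda>x. ereal (count_ratio (LsetA A) x))"
    proof (rule Liminf_mono)
      show "\<forall>\<^sub>F x in at_top. ereal (count_ratio (LsetA F) x) \<le> ereal (count_ratio (LsetA A) x)"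
        using eventually_gt_at_top[of "0::real"]
      proof eventually_elim
        case (elim x)
        show ?case using count_ratio_mono[OF LsetA_mono[OF F(2)] elim] by simp
      qed
    qed
    ultimately show ?thesis unfolding lower_density_def by simp
  qed
  define LD where "LD = lower_density (LsetA A)"
  have L0: "0 \<le> LD" using fin_bound[of "{}"] unfolding LD_def by (simp add: zero_ereal_def)
  have "(\<Sum>\<^sub>\<infinity>a\<in>A. ennreal (dL a)) \<le> e2ennreal LD"
  proof (rule infsum_le_finite_sums)
    show "(\<lambda>a. ennreal (dL a)) summable_on A" by (rule nonneg_summable_on_complete) simp
    fix F assume F: "finite F" "F \<subseteq> A"
    have "(\<Sum>a\<in>F. ennreal (dL a)) = ennreal (sum dL F)" using dL_nonneg by simp
    also have "\<dots> = e2ennreal (ereal (sum dL F))" by (simp add: e2ennreal_ereal)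
    also have "\<dots> \<le> e2ennreal LD" using fin_bound[OF F] unfolding LD_def by (rule e2ennreal_mono)
    finally show "(\<Sum>a\<in>F. ennreal (dL a)) \<le> e2ennreal LD" .
  qed
  then have "enn2ereal (\<Sum>\<^sub>\<infinity>a\<in>A. ennreal (dL a)) \<le> enn2ereal (e2ennreal LD)"
    by (simp add: less_eq_ennreal.rep_eq)
  also have "\<dots> = LD" using L0 by (rule enn2ereal_e2ennreal)
  finally show "enn2ereal (\<Sum>\<^sub>\<infinity>a\<in>A. ennreal (dL a)) \<le> lower_density (LsetA A)" unfolding LD_def .
next
  show "(\<lambda>a. 1 / real a) summable_on A \<longrightarrow>
           (\<exists>d. (dL has_sum d) A \<and> (count_ratio (LsetA A) \<longlongrightarrow> d) at_top)"
  proof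
    assume sA: "(\<lambda>a. 1 / real a) summable_on A"
    have sD: "dL summable_on A"
      by (rule summable_on_comparison_test[OF sA]) (simp_all add: dL_le dL_nonneg)
    define d where "d = infsum dL A"
    define S where "S = infsum (\<lambda>a. 1 / real a) A"
    have "(count_ratio (LsetA A) \<longlongrightarrow> d) at_top"
    proof (rule tendstoI)
      fix e :: real assume e: "e > 0"
      have "((\<lambda>a. 1 / real a) has_sum S) A" unfolding S_def using sA by (rule has_sum_infsum)
      then have "(sum (\<lambda>a. 1 / real a) \<longlongrightarrow> S) (finite_subsets_at_top A)" unfolding has_sum_def .
      then have "eventually (\<lambda>F. dist (sum (\<lambda>a. 1 / real a) F) S < e / 3) (finite_subsets_at_top A)"
        using e by (intro tendstoD) simp_all
      then obtain X where X: "finite X" "X \<subseteq> A" "dist (sum (\<lambda>a. 1 / real a) X) S < e / 3"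
        unfolding eventually_finite_subsets_at_top by blast
      define tail where "tail = infsum (\<lambda>a. 1 / real a) (A - X)"
      define dtail where "dtail = infsum dL (A - X)"
      have tail_eq: "tail = S - sum (\<lambda>a. 1 / real a) X"
        unfolding tail_def S_def
        using infsum_Diff[OF sA summable_on_finite[OF X(1)] X(2)] infsum_finite[OF X(1)] by simp
      have dtail_eq: "dtail = d - sum dL X"
        unfolding dtail_def d_def
        using infsum_Diff[OF sD summable_on_finite[OF X(1)] X(2)] infsum_finite[OF X(1)] by simp
      have t1: "tail < e / 3" using X(3) tail_eq unfolding dist_real_def by linarith
      have dt0: "0 \<le> dtail" unfolding dtail_def by (rule infsum_nonneg) (simp add: dL_nonneg)
      have dt1: "dtail \<le> tail" unfolding dtail_def tail_def
        by (rule infsum_mono) (use summable_on_subset_banach[OF sD] summable_on_subset_banach[OF sA] dL_le in auto)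
      have ev1: "eventually (\<lambda>x. dist (count_ratio (LsetA X) x) (sum dL X) < e / 3) at_top"
        using LsetA_finite_density[OF assms X(1,2)] e by (intro tendstoD) simp_all
      show "eventually (\<lambda>x. dist (count_ratio (LsetA A) x) d < e) at_top"
        using ev1 eventually_gt_at_top[of "0::real"]
      proof eventually_elim
        case (elim x)
        have lo: "count_ratio (LsetA X) x \<le> count_ratio (LsetA A) x"
          using count_ratio_mono[OF LsetA_mono[OF X(2)] elim(2)] .
        have up: "count_ratio (LsetA A) x \<le> count_ratio (LsetA X) x + tail"
          unfolding tail_def using count_ratio_upper[OF assms(1) sA X(1,2) elim(2)] .
        have "\<bar>count_ratio (LsetA X) x - sum dL X\<bar> < e / 3" using elim(1) by (simp add: dist_real_def)
        then show ?case unfolding dist_real_def using lo up dtail_eq dt0 dt1 t1 by linarith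
      qed
    qed
    moreover have "(dL has_sum d) A" unfolding d_def using sD by (rule has_sum_infsum)
    ultimately show "\<exists>d. (dL has_sum d) A \<and> (count_ratio (LsetA A) \<longlongrightarrow> d) at_top" by blast
  qed
qed

end
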